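(* In the FIND setting of the context, fix a leaf cluster $\mathcal C_r$ and a consistent ordering of $\mathcal T_r^+$. If $\mathcal C_i$ is a child of $\mathcal C_k$ in $\mathcal T_r^+$, then $\boldsymbol\Sigma_k(\mathcal B_i,\mathcal B_i)=\boldsymbol\Sigma_{i+}(\mathcal B_i,\mathcal B_i)$.
   Context: Setting (FIND). $\mathcal M$ is a finite set of mesh nodes; $\mathbf A$ is an invertible complex matrix indexed by $\mathcal M\times\mathcal M$, structurally symmetric ($A_{ij}\neq0\iff A_{ji}\neq0$); distinct nodes $i,j$ are connected if $A_{ij}\neq 0$. $\boldsymbol\Sigma$ is a complex matrix indexed by $\mathcal M\times\mathcal M$ with $\Sigma_{ij}=0$ whenever $i\neq j$ and $i,j$ are not connected. $\dagger$ is conjugate transpose, $\mathbf X^{-\dagger}=(\mathbf X^{-1})^\dagger$. $\mathbf X(X,Y)$ is the submatrix with rows in $X$, columns in $Y$. For a cluster $\mathcal C\subseteq\mathcal M$: boundary set $\mathcal B_{\mathcal C}=\{i\in\mathcal C: A_{ij}\neq 0\text{ for some } j\notin\mathcal C\}$, inner set $\mathcal I_{\mathcal C}=\mathcal C\setminus\mathcal B_{\mathcal C}$; for $\mathcal C_g$ write $\mathcal B_g,\mathcal I_g$. Cluster tree: $\mathcal T$ is a rooted binary tree of clusters with root $\mathcal M$, each non-leaf cluster the disjoint union of its two children. For a leaf $\mathcal C_r$ with path $r=a_0,\dots,a_d$ (root) and $b_k$ the sibling of $a_k$, the augmented tree $\mathcal T_r^+$ has root $\mathcal C_{-r}=\mathcal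 M\setminus\mathcal C_r$; for $0\le k\le d-2$, $\mathcal C_{-a_k}=\mathcal M\setminus\mathcal C_{a_k}$ has children $\mathcal C_{b_k}$ and $\mathcal C_{-a_{k+1}}$, with $\mathcal C_{-a_{d-1}}$ identified with $\mathcal C_{b_{d-1}}$; each basic cluster $\mathcal C_{b_k}$ carries its subtree from $\mathcal T$. Private inner nodes: $\mathcal S_g=\mathcal I_g$ for a leaf $g$ of $\mathcal T_r^+$; $\mathcal S_g=\mathcal I_g\setminus(\mathcal I_i\cup\mathcal I_j)$ if $g$ has children $i,j$. Consistent ordering: a total order $g_1,\dots,g_m$ of the nodes of $\mathcal T_r^+$ with every node after all its descendants. Elimination: $\mathbf A_{g_1}=\mathbf A$, $\boldsymbol\Sigma_{g_1}=\boldsymbol\Sigma$; for each $g$ (with $\mathbf A_g(\mathcal S_g,\mathcal S_g)$ invertible), $\mathcal L_g=\mathbf A_g(\mathcal B_g,\mathcal S_g)\mathbf A_g(\mathcal S_g,\mathcal S_g)^{-1}$, $\mathbf L_g$ is the identity on $\mathcal M$ except $\mathbf L_g(\mathcal B_g,\mathcal S_g)=\mathcal L_g$, $\mathbf A_{g+}=\mathbf L_g^{-1}\mathbf A_g$, $\boldsymbol\Sigma_{g+}=\mathbf L_g^{-1}\boldsymbol\Sigma_g\mathbf L_g^{-\dagger}$, and $\mathbf A_{g_{t+1}}=\mathbf A_{g_t+}$, $\boldsymbol\Sigma_{g_{t+1}}=\boldsymbol\Sigma_{g_t+}$. Thus $\boldsymbol\Sigma_k$ is the matrix just before, and $\boldsymbol\Sigma_{k+}$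 just after, eliminating $\mathcal S_k$. *)

theory Defs
  imports "HOL-Analysis.Analysis"
begin

text \<open>Mesh nodes: the finite type 'n (so the mesh is UNIV). Matrices: complex^'n^'n.\<close>

datatype 'a ctree = Leaf "'a set" | Node "'a ctree" "'a ctree"

fun cl :: "'a ctree \<Rightarrow> 'a set" where
  "cl (Leaf C) = C"
| "cl (Node l r) = cl l \<union> cl r"

fun wf_ctree :: "'a ctree \<Rightarrow> bool" where
  "wf_ctree (Leaf C) = True"
| "wf_ctree (Node l r) = (cl l \<inter> cl r = {} \<and> wf_ctree l \<and> wf_ctree r)"

text \<open>Nodes of a tree are addressed by positions (paths from the root; False = left, True = right).\<close>
fun subtree_at :: "'a ctree \<Rightarrow> bool list \<Rightarrow> 'a ctree option" where
  "subtree_at t [] = Some t"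
| "subtree_at (Node l r) (b # p) = subtree_at (if b then r else l) p"
| "subtree_at (Leaf C) (b # p) = None"

definition positions :: "'a ctree \<Rightarrow> bool list set" where
  "positions t = {p. subtree_at t p \<noteq> None}"

definition cl_at :: "'a ctree \<Rightarrow> bool list \<Rightarrow> 'a set" where
  "cl_at t p = cl (the (subtree_at t p))"

text \<open>Augmented tree T_r^+ for the leaf at path p. aug_go walks down the path from a_k,
 with acc the tree of C_{-a_k}; the new complement C_{-a_{k+1}}' has children (sibling, acc).\<close>
fun aug_go :: "'a ctree \<Rightarrow> bool list \<Rightarrow> 'a ctree \<Rightarrow> 'a ctree" where
  "aug_go (Node l r) (b # p) acc = aug_go (if b then r else l) p (Node (if b then l else r) acc)"
| "aug_go t p acc = acc"

fun aug_tree :: "'a ctree \<Rightarrow> bool list \<Rightarrow> 'a ctree" where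
  "aug_tree (Node l r) (b # p) = aug_go (if b then r else l) p (if b then l else r)"
| "aug_tree t p = t"

text \<open>Boundary and inner sets w.r.t. the (original) matrix A.\<close>
definition boundary :: "complex^'n^'n \<Rightarrow> 'n set \<Rightarrow> 'n set" where
  "boundary A C = {i \<in> C. \<exists>j. j \<notin> C \<and> A $ i $ j \<noteq> 0}"

definition inner :: "complex^'n^'n \<Rightarrow> 'n set \<Rightarrow> 'n set" where
  "inner A C = C - boundary A C"

definition private_set :: "complex^'n^'n \<Rightarrow> 'n ctree \<Rightarrow> bool list \<Rightarrow> 'n set" where
  "private_set A t p = (case subtree_at t p of
      Some (Leaf C) \<Rightarrow> inner A C
    | Some (Node l r) \<Rightarrow> inner A (cl (Node l r)) - (inner A (cl l) \<union> inner A (cl r))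
    | None \<Rightarrow> {})"

text \<open>Inverse of the submatrix X(S,S) (entries outside S x S are irrelevant).\<close>
definition is_block_inv :: "complex^'n^'n \<Rightarrow> 'n set \<Rightarrow> complex^'n^'n \<Rightarrow> bool" where
  "is_block_inv X S Y \<longleftrightarrow>
     (\<forall>i\<in>S. \<forall>j\<in>S. (\<Sum>k\<in>S. Y $ i $ k * X $ k $ j) = (if i = j then 1 else 0)) \<and>
     (\<forall>i\<in>S. \<forall>j\<in>S. (\<Sum>k\<in>S. X $ i $ k * Y $ k $ j) = (if i = j then 1 else 0))"

definition block_invertible :: "complex^'n^'n \<Rightarrow> 'n set \<Rightarrow> bool" where
  "block_invertible X S \<longleftrightarrow> (\<exists>Y. is_block_inv X S Y)"

definition block_inv :: "complex^'n^'n \<Rightarrow> 'n set \<Rightarrow> complex^'n^'n" where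
  "block_inv X S = (SOME Y. is_block_inv X S Y)"

definition cadj :: "complex^'n^'n \<Rightarrow> complex^'n^'n" where
  "cadj X = (\<chi> i j. cnj (X $ j $ i))"

definition elim_L :: "complex^'n^'n \<Rightarrow> 'n ctree \<Rightarrow> bool list \<Rightarrow> complex^'n^'n \<Rightarrow> complex^'n^'n" where
  "elim_L A t p X = (let B = boundary A (cl_at t p); S = private_set A t p in
     (\<chi> x y. if x \<in> B \<and> y \<in> S then (\<Sum>k\<in>S. X $ x $ k * block_inv X S $ k $ y)
             else (if x = y then 1 else 0)))"

definition elim_step :: "complex^'n^'n \<Rightarrow> 'n ctree \<Rightarrow> bool list
     \<Rightarrow> (complex^'n^'n) \<times> (complex^'n^'n) \<Rightarrow> (complex^'n^'n) \<times> (complex^'n^'n)" where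
  "elim_step A t p st = (let L = elim_L A t p (fst st); Li = matrix_inv L in
     (Li ** fst st, Li ** snd st ** cadj Li))"

text \<open>State (A_{g_{k+1}}, Sigma_{g_{k+1}}) after eliminating the first k nodes of the ordering.\<close>
definition elim_state :: "complex^'n^'n \<Rightarrow> complex^'n^'n \<Rightarrow> 'n ctree \<Rightarrow> bool list list
     \<Rightarrow> nat \<Rightarrow> (complex^'n^'n) \<times> (complex^'n^'n)" where
  "elim_state A Sig t ord k = fold (elim_step A t) (take k ord) (A, Sig)"

definition consistent_ordering :: "'a ctree \<Rightarrow> bool list list \<Rightarrow> bool" where
  "consistent_ordering t ord \<longleftrightarrow> distinct ord \<and> set ord = positions t \<and>
     (\<forall>i<length ord. \<forall>j<length ord. (\<exists>q. q \<noteq> [] \<and> ord ! j = ord ! i @ q) \<longrightarrow> j < i)"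

end

theory Submission imports Defs begin

definition Lm :: "'n set \<Rightarrow> 'n set \<Rightarrow> ('n \<Rightarrow> 'n \<Rightarrow> complex) \<Rightarrow> complex^'n^'n" where
  "Lm B S e = (\<chi> x y. if x \<in> B \<and> y \<in> S then e x y else (if x = y then 1 else 0))"

lemma Lm_nth: "Lm B S e $ x $ y = (if x \<in> B \<and> y \<in> S then e x y else (if x = y then 1 else 0))"
  by (simp add: Lm_def)

lemma Lm_mul:
  fixes e f :: "'n::finite \<Rightarrow> 'n \<Rightarrow> complex"
  assumes "B \<inter> S = {}"
  shows "Lm B S e ** Lm B S f = Lm B S (\<lambda>x y. e x y + f x y)"
proof -
  have d: "y \<in> S \<Longrightarrow> y \<notin> B" for y using assms by blast
  have "(\<Sum>y\<in>UNIV. Lm B S e $ x $ y * Lm B S f $ y $ z) = Lm B S (\<lambda>x y. e x y + f x y) $ x $ z" for x z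
  proof (cases "x \<in> B")
    case False
    have "Lm B S e $ x $ y * Lm B S f $ y $ z = (if y = x then Lm B S f $ x $ z else 0)" for y
      using False by (simp only: Lm_nth) simp
    then have "(\<Sum>y\<in>UNIV. Lm B S e $ x $ y * Lm B S f $ y $ z) = Lm B S f $ x $ z"
      by (simp only:) simp
    then show ?thesis using False by (simp only: Lm_nth) simp
  next
    case True
    have xS: "x \<notin> S" using True d by blast
    have "Lm B S e $ x $ y * Lm B S f $ y $ z =
       (if y = z then (if z \<in> S then e x z else 0) else 0) + (if y = x then Lm B S f $ x $ z else 0)" for y
    proof (cases "y \<in> S")
      case True
      then have "y \<noteq> x" using xS by blast
      then show ?thesis using True d[OF True] \<open>x \<in> B\<close> by (simp only: Lm_nth) (cases "y = z"; simp)
    next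
      case False
      then show ?thesis using \<open>x \<in> B\<close> by (simp only: Lm_nth) (cases "y = x"; cases "y = z"; simp)
    qed
    then have "(\<Sum>y\<in>UNIV. Lm B S e $ x $ y * Lm B S f $ y $ z) =
       (\<Sum>y\<in>UNIV. (if y = z then (if z \<in> S then e x z else 0) else 0) + (if y = x then Lm B S f $ x $ z else 0))"
      by (simp only:)
    also have "\<dots> = (if z \<in> S then e x z else 0) + Lm B S f $ x $ z"
      by (simp add: sum.distrib)
    finally show ?thesis using True xS by (simp only: Lm_nth) (cases "z \<in> S"; cases "x = z"; simp)
  qed
  then show ?thesis by (simp add: matrix_matrix_mult_def vec_eq_iff)
qed

lemma Lm_zero: "B \<inter> S = {} \<Longrightarrow> Lm B S (\<lambda>x y. 0) = mat 1"
  by (auto simp: Lm_def mat_def vec_eq_iff)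

lemma Lm_inv:
  assumes "B \<inter> S = {}"
  shows "matrix_inv (Lm B S e) = Lm B S (\<lambda>x y. - e x y)"
proof -
  let ?L = "Lm B S e" and ?M = "Lm B S (\<lambda>x y. - e x y)"
  have 1: "?L ** ?M = mat 1" "?M ** ?L = mat 1"
    using Lm_mul[OF assms, of e "\<lambda>x y. - e x y"] Lm_mul[OF assms, of "\<lambda>x y. - e x y" e] Lm_zero[OF assms]
    by simp_all
  have "?L ** matrix_inv ?L = mat 1 \<and> matrix_inv ?L ** ?L = mat 1"
    unfolding matrix_inv_def by (rule someI[where x="?M"]) (use 1 in auto)
  then have "matrix_inv ?L = matrix_inv ?L ** (?L ** ?M)" using 1 by simp
  also have "\<dots> = ?M" using \<open>?L ** matrix_inv ?L = mat 1 \<and> matrix_inv ?L ** ?L = mat 1\<close>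
    by (simp add: matrix_mul_assoc)
  finally show ?thesis .
qed

lemma elim_L_Lm: "\<exists>e. elim_L A t p X = Lm (boundary A (cl_at t p)) (private_set A t p) e"
  unfolding elim_L_def Lm_def Let_def
  by (rule exI[where x="\<lambda>x y. \<Sum>k\<in>private_set A t p. X $ x $ k * block_inv X (private_set A t p) $ k $ y"]) (rule refl)

lemma private_disj: "boundary A (cl_at t p) \<inter> private_set A t p = {}"
  by (auto simp: private_set_def cl_at_def inner_def split: option.splits ctree.splits)

lemma step_pres:
  assumes "x \<notin> boundary A (cl_at t p)" "y \<notin> boundary A (cl_at t p)"
  shows "snd (elim_step A t p st) $ x $ y = snd st $ x $ y"
proof -
  let ?B = "boundary A (cl_at t p)" and ?S = "private_set A t p"
  obtain e where e: "elim_L A t p (fst st) = Lm ?B ?S e" using elim_L_Lm by blast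
  define M where "M = Lm ?B ?S (\<lambda>x y. - e x y)"
  have inv: "matrix_inv (elim_L A t p (fst st)) = M"
    unfolding e M_def by (rule Lm_inv[OF private_disj])
  have rx: "M $ x $ k * c = (if k = x then c else 0)" for k c using assms(1) unfolding M_def by (simp only: Lm_nth) simp
  have ry: "c * cnj (M $ y $ k) = (if k = y then c else 0)" for k c using assms(2) unfolding M_def by (simp only: Lm_nth) simp
  have "(M ** snd st) $ x $ z = snd st $ x $ z" for z
    by (simp add: matrix_matrix_mult_def rx)
  then have "(M ** snd st ** cadj M) $ x $ y = snd st $ x $ y"
    by (simp add: matrix_matrix_mult_def cadj_def ry)
  moreover have "snd (elim_step A t p st) = M ** snd st ** cadj M"
    unfolding elim_step_def Let_def inv by (simp only: snd_conv)
  ultimately show ?thesis by (simp only:)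
qed

lemma fold_pres:
  assumes "\<forall>g\<in>set gs. x \<notin> boundary A (cl_at t g) \<and> y \<notin> boundary A (cl_at t g)"
  shows "snd (fold (elim_step A t) gs st) $ x $ y = snd st $ x $ y"
  using assms
proof (induction gs arbitrary: st)
  case Nil then show ?case by simp
next
  case (Cons g gs)
  then show ?case using step_pres[of x A t g y st] by simp
qed

lemma cl_sub: "subtree_at t p = Some u \<Longrightarrow> cl u \<subseteq> cl t"
proof (induction t arbitrary: p)
  case (Leaf C) then show ?case by (cases p) auto
next
  case (Node l r) then show ?case by (cases p) (auto split: if_splits)
qed

lemma cl_disj: "wf_ctree t \<Longrightarrow> subtree_at t p = Some u \<Longrightarrow> subtree_at t q = Some v \<Longrightarrow>
   (\<nexists>r. q = p @ r) \<Longrightarrow> (\<nexists>r. p = q @ r) \<Longrightarrow> cl u \<inter> cl v = {}"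
proof (induction t arbitrary: p q)
  case (Leaf C) then show ?case by (cases p; cases q) auto
next
  case (Node l r)
  show ?case
  proof (cases p)
    case Nil then show ?thesis using Node.prems by auto
  next
    case (Cons b p')
    show ?thesis
    proof (cases q)
      case Nil then show ?thesis using Node.prems by auto
    next
      case (Cons c q')
      show ?thesis
      proof (cases "b = c")
        case True
        then show ?thesis using Node.prems Node.IH \<open>p = b # p'\<close> \<open>q = c # q'\<close>
          by (cases b) auto
      next
        case False
        then show ?thesis using Node.prems \<open>p = b # p'\<close> \<open>q = c # q'\<close>
          cl_sub[of l p' u] cl_sub[of r p' u] cl_sub[of l q' v] cl_sub[of r q' v]
          by (cases b; cases c) auto
      qed
    qed
  qed
qed

lemma wf_aug_go: "wf_ctree t \<Longrightarrow> wf_ctree acc \<Longrightarrow> cl t \<inter> cl acc = {} \<Longrightarrow> wf_ctree (aug_go t p acc)"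
  by (induction t p acc rule: aug_go.induct) (auto, blast+)

lemma wf_aug: "wf_ctree t \<Longrightarrow> wf_ctree (aug_tree t p)"
  by (induction t p rule: aug_tree.induct) (auto intro!: wf_aug_go)

lemma boundary_sub: "boundary A C \<subseteq> C"
  by (auto simp: boundary_def)

theorem corollary2:
  fixes A Sig :: "complex^'n^'n" and T Tp :: "'n ctree" and rp :: "bool list"
    and Cr :: "'n set" and ord :: "bool list list" and k i :: nat and b :: bool
  assumes "invertible A"
    and "\<forall>x y. A $ x $ y \<noteq> 0 \<longleftrightarrow> A $ y $ x \<noteq> 0"
    and "\<forall>x y. x \<noteq> y \<and> A $ x $ y = 0 \<longrightarrow> Sig $ x $ y = 0"
    and "wf_ctree T" and "cl T = UNIV"
    and "subtree_at T rp = Some (Leaf Cr)" and "rp \<noteq> []"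
    and "Tp = aug_tree T rp"
    and "consistent_ordering Tp ord"
    and "\<forall>t<length ord. block_invertible (fst (elim_state A Sig Tp ord t)) (private_set A Tp (ord ! t))"
    and "k < length ord" and "i < length ord" and "ord ! i = ord ! k @ [b]"
  shows "\<forall>x\<in>boundary A (cl_at Tp (ord ! i)). \<forall>y\<in>boundary A (cl_at Tp (ord ! i)).
           snd (elim_state A Sig Tp ord k) $ x $ y = snd (elim_state A Sig Tp ord (Suc i)) $ x $ y"
proof (intro ballI)
  fix x y
  assume x: "x \<in> boundary A (cl_at Tp (ord ! i))" and y: "y \<in> boundary A (cl_at Tp (ord ! i))"
  have wf: "wf_ctree Tp" using assms(4,8) wf_aug by blast
  have co: "distinct ord" "set ord = positions Tp"
    "\<And>i j. i<length ord \<Longrightarrow> j<length ord \<Longrightarrow> (\<exists>q. q \<noteq> [] \<and> ord ! j = ord ! i @ q) \<Longrightarrow> j < i"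
    using assms(9) unfolding consistent_ordering_def by blast+
  have ik: "i < k" using co(3)[of k i] assms(11,12,13) by blast
  have pos: "\<And>j. j < length ord \<Longrightarrow> subtree_at Tp (ord ! j) \<noteq> None"
    using co(2) unfolding positions_def by (metis mem_Collect_eq nth_mem)
  have disj: "cl_at Tp (ord ! j) \<inter> cl_at Tp (ord ! i) = {}" if j: "Suc i \<le> j" "j < k" for j
  proof -
    have jl: "j < length ord" using j assms(11) by simp
    have ne: "ord ! j \<noteq> ord ! i" using co(1) jl assms(12) j nth_eq_iff_index_eq by fastforce
    have n1: "\<nexists>r. ord ! i = ord ! j @ r"
    proof
      assume "\<exists>r. ord ! i = ord ! j @ r"
      then obtain r where r: "ord ! i = ord ! j @ r" by blast
      with ne have "r \<noteq> []" by auto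
      show False
      proof (cases "r = [b]")
        case True
        then have "ord ! j = ord ! k" using r assms(13) by simp
        then show False using co(1) jl assms(11) j nth_eq_iff_index_eq by fastforce
      next
        case False
        have "r = butlast r @ [last r]" using \<open>r \<noteq> []\<close> by simp
        then have "ord ! k @ [b] = (ord ! j @ butlast r) @ [last r]" using r assms(13) by simp
        then have "ord ! k = ord ! j @ butlast r" "b = last r" by simp_all
        moreover have "butlast r \<noteq> []"
        proof
          assume "butlast r = []"
          then have "r = [last r]" using \<open>r = butlast r @ [last r]\<close> by simp
          then show False using False calculation(2) by simp
        qed
        ultimately have "k < j" using co(3)[of j k] jl assms(11) by blast
        then show False using j by simp
      qed
    qed
    have n2: "\<nexists>r. ord ! j = ord ! i @ r"
    proof
      assume "\<exists>r. ord ! j = ord ! i @ r"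
      then obtain r where r: "ord ! j = ord ! i @ r" by blast
      with ne have "r \<noteq> []" by auto
      then have "j < i" using co(3)[of i j] jl assms(12) r by blast
      then show False using j by simp
    qed
    obtain u where u: "subtree_at Tp (ord ! j) = Some u" using pos[OF jl] by blast
    obtain v where v: "subtree_at Tp (ord ! i) = Some v" using pos[OF assms(12)] by blast
    show ?thesis using cl_disj[OF wf u v n1 n2] u v by (simp add: cl_at_def)
  qed
  define gs where "gs = drop (Suc i) (take k ord)"
  have split: "take k ord = take (Suc i) ord @ gs"
    unfolding gs_def using ik by (metis append_take_drop_id min.absorb1 Suc_leI take_take)
  have gsP: "\<forall>g\<in>set gs. x \<notin> boundary A (cl_at Tp g) \<and> y \<notin> boundary A (cl_at Tp g)"
  proof
    fix g assume "g \<in> set gs"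
    then obtain m where m: "m < length gs" "g = gs ! m" by (metis in_set_conv_nth)
    have "Suc i + m < k" using m(1) assms(11) unfolding gs_def by simp
    moreover have "g = ord ! (Suc i + m)" using m calculation unfolding gs_def by simp
    ultimately have "cl_at Tp g \<inter> cl_at Tp (ord ! i) = {}" using disj[of "Suc i + m"] by simp
    then show "x \<notin> boundary A (cl_at Tp g) \<and> y \<notin> boundary A (cl_at Tp g)"
      using x y boundary_sub by blast
  qed
  show "snd (elim_state A Sig Tp ord k) $ x $ y = snd (elim_state A Sig Tp ord (Suc i)) $ x $ y"
    unfolding elim_state_def split fold_append comp_def
    using fold_pres[OF gsP] by simp
qed

end
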